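(* Let $V$ be a crossed module and $M$ an abelian $\pi_0(V)$-module. The map $z\mapsto(z_M,z_G)$ is an isomorphism of abelian groups from $Z^2(V,M)$ onto \[\{(c_1,z_0)\in \mathrm{Map}(M_V,M)\times Z^2(G_V,M):\ c_1(nm)=c_1(n)+c_1(m)-z_0(\mu(n),\mu(m)),\ c_1({}^gm)=\bar g\cdot c_1(m)+z_0(\mu({}^gm),g)-z_0(g,\mu(m))\ \forall m,n\in M_V,g\in G_V\}.\] Equivalently, $Z^2(V,M)$ together with $z\mapsto z_M$ and $z\mapsto z_G$ is the pullback of the homomorphisms $\mathrm{Map}(M_V,M)\to C^2(M_V,M)\times \mathrm{Map}(M_V\times G_V,M)$, $c_1\mapsto(dc_1,\alpha_1(c_1))$, and $Z^2(G_V,M)\to C^2(M_V,M)\times\mathrm{Map}(M_V\times G_V,M)$, $c_0\mapsto(c_0\circ(\mu\times\mu),\alpha_0(c_0))$, where $M$ is a trivial $M_V$-module, $\alpha_1(c_1)(m,g)=c_1({}^gm)-\bar g\cdot c_1(m)$ and $\alpha_0(c_0)(m,g)=c_0(\mu({}^gm),g)-c_0(g,\mu(m))$.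
   Context: Crossed module $V$: group $G_V$, group $M_V$ with left $G_V$-action ${}^gm$, homomorphism $\mu:M_V\to G_V$ with $\mu({}^gm)=g\mu(m)g^{-1}$, ${}^{\mu(n)}m=nmn^{-1}$; $\pi_0(V)=G_V/\mu(M_V)$, $\bar g$ the class of $g$. Cochains of $V$: $C^2(V,M)=\mathrm{Map}(M_V\times G_V\times G_V,M)$, and $d:C^2(V,M)\to C^3(V,M)=\mathrm{Map}(M_V\times M_V\times G_V\times M_V\times G_V\times G_V,M)$ is $(dc)(p,n,k,m,h,g)=c(p,\mu(n)k,\mu(m)h)-c(pn,k,hg)+c(n\,{}^km,kh,g)-\bar k\cdot c(m,h,g)$; $Z^2(V,M)=\ker d$. Module part $z_M(m):=z(m,1,1)$, group part $z_G(h,g):=z(1,h,g)$. Group cochains for a group $\Pi$ acting on $A$: $C^n(\Pi,A)=\mathrm{Map}(\Pi^n,A)$, $(dc)(h)$ on $C^1$: $(dc)(h,g)=c(h)-c(hg)+h\cdot c(g)$; on $C^2$: $(dc)(r,q,p)=c(r,q)-c(r,qp)+c(rq,p)-r\cdot c(q,p)$; $G_V$ acts on $M$ via $\pi_0(V)$. *)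

theory Defs
  imports "HOL-Algebra.Group" "HOL-Library.Function_Algebras" "HOL-Library.Product_Plus"
begin

locale crossed_module = G: group G + Mv: group Mv
  for G :: "('g, 'c) monoid_scheme" (structure) and Mv :: "('m, 'd) monoid_scheme" (structure)
  + fixes act :: "'g \<Rightarrow> 'm \<Rightarrow> 'm" and mu :: "'m \<Rightarrow> 'g"
  assumes act_closed: "\<lbrakk>g \<in> carrier G; m \<in> carrier Mv\<rbrakk> \<Longrightarrow> act g m \<in> carrier Mv"
    and act_hom: "\<lbrakk>g \<in> carrier G; m \<in> carrier Mv; n \<in> carrier Mv\<rbrakk>
                  \<Longrightarrow> act g (m \<otimes>\<^bsub>Mv\<^esub> n) = act g m \<otimes>\<^bsub>Mv\<^esub> act g n"
    and act_one: "m \<in> carrier Mv \<Longrightarrow> act \<one>\<^bsub>G\<^esub> m = m"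
    and act_mult: "\<lbrakk>g \<in> carrier G; h \<in> carrier G; m \<in> carrier Mv\<rbrakk>
                  \<Longrightarrow> act (g \<otimes>\<^bsub>G\<^esub> h) m = act g (act h m)"
    and mu_hom: "mu \<in> hom Mv G"
    and mu_equivariant: "\<lbrakk>g \<in> carrier G; m \<in> carrier Mv\<rbrakk>
                  \<Longrightarrow> mu (act g m) = g \<otimes>\<^bsub>G\<^esub> mu m \<otimes>\<^bsub>G\<^esub> inv\<^bsub>G\<^esub> g"
    and peiffer: "\<lbrakk>n \<in> carrier Mv; m \<in> carrier Mv\<rbrakk>
                  \<Longrightarrow> act (mu n) m = n \<otimes>\<^bsub>Mv\<^esub> m \<otimes>\<^bsub>Mv\<^esub> inv\<^bsub>Mv\<^esub> n"

text \<open>An abelian pi_0(V)-module, i.e. an abelian group (the type 'a) with a left action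
  ma of G_V by additive maps that is trivial on mu(M_V) (hence factors through
  pi_0(V) = G_V / mu(M_V)); ma g x is \<bar>g\<bar> . x.\<close>
definition pi0_module ::
  "('g, 'c) monoid_scheme \<Rightarrow> ('m, 'd) monoid_scheme \<Rightarrow> ('m \<Rightarrow> 'g) \<Rightarrow> ('g \<Rightarrow> 'a::ab_group_add \<Rightarrow> 'a) \<Rightarrow> bool"
  where "pi0_module G Mv mu ma \<longleftrightarrow>
    (\<forall>g\<in>carrier G. \<forall>x y. ma g (x + y) = ma g x + ma g y) \<and>
    (\<forall>x. ma \<one>\<^bsub>G\<^esub> x = x) \<and>
    (\<forall>g\<in>carrier G. \<forall>h\<in>carrier G. \<forall>x. ma (g \<otimes>\<^bsub>G\<^esub> h) x = ma g (ma h x)) \<and>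
    (\<forall>m\<in>carrier Mv. \<forall>x. ma (mu m) x = x)"

text \<open>Cochains are maps on the carriers; as HOL functions they are taken to be 0 outside
  the carriers (extensional), so that Map(X, M) is represented faithfully.\<close>

definition Z2V ::
  "('g, 'c) monoid_scheme \<Rightarrow> ('m, 'd) monoid_scheme \<Rightarrow> ('g \<Rightarrow> 'm \<Rightarrow> 'm) \<Rightarrow> ('m \<Rightarrow> 'g)
   \<Rightarrow> ('g \<Rightarrow> 'a::ab_group_add \<Rightarrow> 'a) \<Rightarrow> ('m \<Rightarrow> 'g \<Rightarrow> 'g \<Rightarrow> 'a) set"
  where "Z2V G Mv act mu ma = {c.
    (\<forall>m h g. \<not> (m \<in> carrier Mv \<and> h \<in> carrier G \<and> g \<in> carrier G) \<longrightarrow> c m h g = 0) \<and>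
    (\<forall>p\<in>carrier Mv. \<forall>n\<in>carrier Mv. \<forall>k\<in>carrier G. \<forall>m\<in>carrier Mv. \<forall>h\<in>carrier G. \<forall>g\<in>carrier G.
       c p (mu n \<otimes>\<^bsub>G\<^esub> k) (mu m \<otimes>\<^bsub>G\<^esub> h) - c (p \<otimes>\<^bsub>Mv\<^esub> n) k (h \<otimes>\<^bsub>G\<^esub> g)
       + c (n \<otimes>\<^bsub>Mv\<^esub> act k m) (k \<otimes>\<^bsub>G\<^esub> h) g - ma k (c m h g) = 0)}"

definition Z2G ::
  "('g, 'c) monoid_scheme \<Rightarrow> ('g \<Rightarrow> 'a::ab_group_add \<Rightarrow> 'a) \<Rightarrow> ('g \<Rightarrow> 'g \<Rightarrow> 'a) set"
  where "Z2G G ma = {c.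
    (\<forall>h g. \<not> (h \<in> carrier G \<and> g \<in> carrier G) \<longrightarrow> c h g = 0) \<and>
    (\<forall>r\<in>carrier G. \<forall>q\<in>carrier G. \<forall>p\<in>carrier G.
       c r q - c r (q \<otimes>\<^bsub>G\<^esub> p) + c (r \<otimes>\<^bsub>G\<^esub> q) p - ma r (c q p) = 0)}"

definition pairs_set ::
  "('g, 'c) monoid_scheme \<Rightarrow> ('m, 'd) monoid_scheme \<Rightarrow> ('g \<Rightarrow> 'm \<Rightarrow> 'm) \<Rightarrow> ('m \<Rightarrow> 'g)
   \<Rightarrow> ('g \<Rightarrow> 'a::ab_group_add \<Rightarrow> 'a) \<Rightarrow> (('m \<Rightarrow> 'a) \<times> ('g \<Rightarrow> 'g \<Rightarrow> 'a)) set"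
  where "pairs_set G Mv act mu ma = {(c1, z0).
    (\<forall>m. m \<notin> carrier Mv \<longrightarrow> c1 m = 0) \<and> z0 \<in> Z2G G ma \<and>
    (\<forall>m\<in>carrier Mv. \<forall>n\<in>carrier Mv.
       c1 (n \<otimes>\<^bsub>Mv\<^esub> m) = c1 n + c1 m - z0 (mu n) (mu m)) \<and>
    (\<forall>m\<in>carrier Mv. \<forall>g\<in>carrier G.
       c1 (act g m) = ma g (c1 m) + z0 (mu (act g m)) g - z0 g (mu m))}"

definition add_grp :: "'a::ab_group_add set \<Rightarrow> 'a monoid"
  where "add_grp S = \<lparr>carrier = S, mult = (+), one = 0\<rparr>"

definition restr_map ::
  "('g, 'c) monoid_scheme \<Rightarrow> ('m, 'd) monoid_scheme \<Rightarrow> ('m \<Rightarrow> 'g \<Rightarrow> 'g \<Rightarrow> 'a)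
   \<Rightarrow> ('m \<Rightarrow> 'a) \<times> ('g \<Rightarrow> 'g \<Rightarrow> 'a)"
  where "restr_map G Mv z = ((\<lambda>m. z m \<one>\<^bsub>G\<^esub> \<one>\<^bsub>G\<^esub>), (\<lambda>h g. z \<one>\<^bsub>Mv\<^esub> h g))"

end

theory Submission
  imports Defs
begin

lemma add_grp_comm_group:
  fixes S :: "'a::ab_group_add set"
  assumes "0 \<in> S" "\<And>x y. x \<in> S \<Longrightarrow> y \<in> S \<Longrightarrow> x + y \<in> S" "\<And>x. x \<in> S \<Longrightarrow> - x \<in> S"
  shows "comm_group (add_grp S)"
  apply (rule comm_groupI)
  using assms by (auto simp: add_grp_def add.assoc add.commute intro!: bexI[where x="- _"])

lemma comb: "(A::'a::ab_group_add) = 0 \<Longrightarrow> x - y = A \<Longrightarrow> x = y" by simp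
lemma add0: "(A::'a::ab_group_add) = 0 \<Longrightarrow> B = 0 \<Longrightarrow> A + B = 0" by simp
lemma neg0: "(A::'a::ab_group_add) = 0 \<Longrightarrow> - A = 0" by simp

locale cm_mod = crossed_module G Mv act mu
  for G :: "('g, 'c) monoid_scheme" (structure) and Mv :: "('m, 'd) monoid_scheme" (structure)
  and act mu +
  fixes ma :: "'g \<Rightarrow> 'a::ab_group_add \<Rightarrow> 'a"
  assumes pi0: "pi0_module G Mv mu ma"
begin

sublocale muh: group_hom Mv G mu
  by (simp add: group_hom_def group_hom_axioms_def mu_hom G.group_axioms Mv.group_axioms)

lemma ma_add: "g \<in> carrier G \<Longrightarrow> ma g (x + y) = ma g x + ma g y"
  using pi0 by (simp add: pi0_module_def)
lemma ma_zero: "g \<in> carrier G \<Longrightarrow> ma g 0 = 0"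
  using ma_add[of g 0 0] by simp
lemma ma_minus: "g \<in> carrier G \<Longrightarrow> ma g (- x) = - ma g x"
  using ma_add[of g x "- x"] ma_zero[of g] by (simp add: eq_neg_iff_add_eq_0 add.commute)
lemma ma_diff: "g \<in> carrier G \<Longrightarrow> ma g (x - y) = ma g x - ma g y"
  using ma_add[of g x "- y"] ma_minus[of g y] by simp
lemma ma_one: "ma \<one> x = x"
  using pi0 by (simp add: pi0_module_def)
lemma ma_mu: "m \<in> carrier Mv \<Longrightarrow> ma (mu m) x = x"
  using pi0 by (simp add: pi0_module_def)

lemma mu_closed[simp]: "m \<in> carrier Mv \<Longrightarrow> mu m \<in> carrier G"
  by simp
lemma act_one_right: "k \<in> carrier G \<Longrightarrow> act k \<one>\<^bsub>Mv\<^esub> = \<one>\<^bsub>Mv\<^esub>"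
proof -
  assume k: "k \<in> carrier G"
  have "act k \<one>\<^bsub>Mv\<^esub> \<otimes>\<^bsub>Mv\<^esub> act k \<one>\<^bsub>Mv\<^esub> = act k \<one>\<^bsub>Mv\<^esub> \<otimes>\<^bsub>Mv\<^esub> \<one>\<^bsub>Mv\<^esub>"
    using act_hom[OF k, of "\<one>\<^bsub>Mv\<^esub>" "\<one>\<^bsub>Mv\<^esub>"] act_closed[OF k] by simp
  then show ?thesis using act_closed[OF k] using Mv.l_cancel_one by (metis Mv.one_closed Mv.r_one)
qed

lemma mu_act_k: "k \<in> carrier G \<Longrightarrow> m \<in> carrier Mv \<Longrightarrow> mu (act k m) \<otimes> k = k \<otimes> mu m"
  by (simp add: mu_equivariant G.m_assoc)

lemma Z2G_coc: "z0 \<in> Z2G G ma \<Longrightarrow> r \<in> carrier G \<Longrightarrow> q \<in> carrier G \<Longrightarrow> p \<in> carrier G \<Longrightarrow>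
   z0 r q - z0 r (q \<otimes> p) + z0 (r \<otimes> q) p - ma r (z0 q p) = 0"
  by (simp add: Z2G_def)
lemma Z2G_ext: "z0 \<in> Z2G G ma \<Longrightarrow> \<not> (h \<in> carrier G \<and> g \<in> carrier G) \<Longrightarrow> z0 h g = 0"
  by (simp add: Z2G_def)
lemma Z2G_1h: "z0 \<in> Z2G G ma \<Longrightarrow> h \<in> carrier G \<Longrightarrow> z0 \<one> h = z0 \<one> \<one>"
  using Z2G_coc[of z0 \<one> \<one> h] by (simp add: ma_one)
lemma Z2G_h1: "z0 \<in> Z2G G ma \<Longrightarrow> h \<in> carrier G \<Longrightarrow> z0 h \<one> = ma h (z0 \<one> \<one>)"
  using Z2G_coc[of z0 h \<one> \<one>] by (simp add: algebra_simps)

lemma Z2V_D: "z \<in> Z2V G Mv act mu ma \<Longrightarrow> p \<in> carrier Mv \<Longrightarrow> n \<in> carrier Mv \<Longrightarrow> k \<in> carrier G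
  \<Longrightarrow> m \<in> carrier Mv \<Longrightarrow> h \<in> carrier G \<Longrightarrow> g \<in> carrier G \<Longrightarrow>
       z p (mu n \<otimes> k) (mu m \<otimes> h) - z (p \<otimes>\<^bsub>Mv\<^esub> n) k (h \<otimes> g)
       + z (n \<otimes>\<^bsub>Mv\<^esub> act k m) (k \<otimes> h) g - ma k (z m h g) = 0"
  unfolding Z2V_def by blast
lemma Z2V_ext: "z \<in> Z2V G Mv act mu ma \<Longrightarrow> \<not> (m \<in> carrier Mv \<and> h \<in> carrier G \<and> g \<in> carrier G) \<Longrightarrow> z m h g = 0"
  unfolding Z2V_def by blast

lemma Z2V_n1: "z \<in> Z2V G Mv act mu ma \<Longrightarrow> n \<in> carrier Mv \<Longrightarrow> g \<in> carrier G \<Longrightarrow> z n \<one> g = z n \<one> \<one>"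
  using Z2V_D[of z n "\<one>\<^bsub>Mv\<^esub>" \<one> "\<one>\<^bsub>Mv\<^esub>" \<one> g] by (simp add: act_one ma_one)

lemma Z2V_formula: "z \<in> Z2V G Mv act mu ma \<Longrightarrow> n \<in> carrier Mv \<Longrightarrow> h \<in> carrier G \<Longrightarrow> g \<in> carrier G \<Longrightarrow>
   z n h g = z n \<one> \<one> - z \<one>\<^bsub>Mv\<^esub> (mu n) h + z \<one>\<^bsub>Mv\<^esub> h g"
  using Z2V_D[of z "\<one>\<^bsub>Mv\<^esub>" n \<one> "\<one>\<^bsub>Mv\<^esub>" h g] Z2V_n1[of z n "h \<otimes> g"]
  by (simp add: act_one ma_one algebra_simps)

lemma Z2V_Z2G: "z \<in> Z2V G Mv act mu ma \<Longrightarrow> (\<lambda>h g. z \<one>\<^bsub>Mv\<^esub> h g) \<in> Z2G G ma"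
  unfolding Z2G_def mem_Collect_eq
proof (intro conjI allI impI ballI)
  fix h g assume "z \<in> Z2V G Mv act mu ma" "\<not> (h \<in> carrier G \<and> g \<in> carrier G)"
  then show "z \<one>\<^bsub>Mv\<^esub> h g = 0" using Z2V_ext by blast
next
  fix r q p assume z: "z \<in> Z2V G Mv act mu ma" and c: "r \<in> carrier G" "q \<in> carrier G" "p \<in> carrier G"
  show "z \<one>\<^bsub>Mv\<^esub> r q - z \<one>\<^bsub>Mv\<^esub> r (q \<otimes> p) + z \<one>\<^bsub>Mv\<^esub> (r \<otimes> q) p - ma r (z \<one>\<^bsub>Mv\<^esub> q p) = 0"
    using Z2V_D[OF z, of "\<one>\<^bsub>Mv\<^esub>" "\<one>\<^bsub>Mv\<^esub>" r "\<one>\<^bsub>Mv\<^esub>" q p] c by (simp add: act_one_right)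
qed

lemma Z2V_pairs: "z \<in> Z2V G Mv act mu ma \<Longrightarrow> restr_map G Mv z \<in> pairs_set G Mv act mu ma"
  unfolding restr_map_def pairs_set_def
proof (simp add: Z2V_Z2G, safe)
  fix m assume z: "z \<in> Z2V G Mv act mu ma" and "m \<notin> carrier Mv"
  then show "z m \<one> \<one> = 0" using Z2V_ext by blast
next
  fix m n assume z: "z \<in> Z2V G Mv act mu ma" and c: "m \<in> carrier Mv" "n \<in> carrier Mv"
  have z0: "(\<lambda>h g. z \<one>\<^bsub>Mv\<^esub> h g) \<in> Z2G G ma" using Z2V_Z2G[OF z] .
  have "z n (mu m) \<one> = z n \<one> \<one> - z \<one>\<^bsub>Mv\<^esub> (mu n) (mu m) + z \<one>\<^bsub>Mv\<^esub> (mu m) \<one>"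
    using Z2V_formula[OF z, of n "mu m" \<one>] c by simp
  moreover have "z \<one>\<^bsub>Mv\<^esub> (mu m) \<one> = z \<one>\<^bsub>Mv\<^esub> \<one> \<one>"
    using Z2G_h1[OF z0, of "mu m"] c by (simp add: ma_mu)
  ultimately have f: "z n (mu m) \<one> = z n \<one> \<one> - z \<one>\<^bsub>Mv\<^esub> (mu n) (mu m) + z \<one>\<^bsub>Mv\<^esub> \<one> \<one>" by simp
  have a: "mu m \<otimes> \<one> = mu m" "mu \<one>\<^bsub>Mv\<^esub> = \<one>" "\<one> \<otimes> \<one> = \<one>" "act \<one> \<one>\<^bsub>Mv\<^esub> = \<one>\<^bsub>Mv\<^esub>"
      "m \<otimes>\<^bsub>Mv\<^esub> \<one>\<^bsub>Mv\<^esub> = m" using c by (simp_all add: act_one)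
  note E = Z2V_D[OF z, of n m \<one> "\<one>\<^bsub>Mv\<^esub>" \<one> \<one>, OF c(2,1) G.one_closed Mv.one_closed G.one_closed G.one_closed, unfolded a ma_one, unfolded f]
  show "z (n \<otimes>\<^bsub>Mv\<^esub> m) \<one> \<one> = z n \<one> \<one> + z m \<one> \<one> - z \<one>\<^bsub>Mv\<^esub> (mu n) (mu m)"
    by (rule comb[OF neg0[OF E]]) (simp add: algebra_simps)
next
  fix m g assume z: "z \<in> Z2V G Mv act mu ma" and c: "m \<in> carrier Mv" "g \<in> carrier G"
  have "z \<one>\<^bsub>Mv\<^esub> g (mu m) - z \<one>\<^bsub>Mv\<^esub> g \<one> + z (act g m) g \<one> - ma g (z m \<one> \<one>) = 0"
    using Z2V_D[OF z, of "\<one>\<^bsub>Mv\<^esub>" "\<one>\<^bsub>Mv\<^esub>" g m \<one> \<one>] c act_closed by simp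
  moreover have "z (act g m) g \<one> = z (act g m) \<one> \<one> - z \<one>\<^bsub>Mv\<^esub> (mu (act g m)) g + z \<one>\<^bsub>Mv\<^esub> g \<one>"
    using Z2V_formula[OF z, of "act g m" g \<one>] c act_closed by simp
  ultimately show "z (act g m) \<one> \<one> = ma g (z m \<one> \<one>) + z \<one>\<^bsub>Mv\<^esub> (mu (act g m)) g - z \<one>\<^bsub>Mv\<^esub> g (mu m)"
    by (simp add: algebra_simps)
qed

lemma Z2V_inj: "z \<in> Z2V G Mv act mu ma \<Longrightarrow> z' \<in> Z2V G Mv act mu ma \<Longrightarrow> restr_map G Mv z = restr_map G Mv z' \<Longrightarrow> z = z'"
proof (intro ext)
  fix m h g
  assume z: "z \<in> Z2V G Mv act mu ma" and z': "z' \<in> Z2V G Mv act mu ma" and e: "restr_map G Mv z = restr_map G Mv z'"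
  have e1: "\<And>m. z m \<one> \<one> = z' m \<one> \<one>" and e2: "\<And>h g. z \<one>\<^bsub>Mv\<^esub> h g = z' \<one>\<^bsub>Mv\<^esub> h g"
    using e by (simp_all add: restr_map_def fun_eq_iff)
  show "z m h g = z' m h g"
  proof (cases "m \<in> carrier Mv \<and> h \<in> carrier G \<and> g \<in> carrier G")
    case True
    then show ?thesis using Z2V_formula[OF z, of m h g] Z2V_formula[OF z', of m h g] e1 e2 by simp
  next
    case False
    then show ?thesis using Z2V_ext[OF z, of m h g] Z2V_ext[OF z', of m h g] by simp
  qed
qed


definition Zof :: "('m \<Rightarrow> 'a) \<Rightarrow> ('g \<Rightarrow> 'g \<Rightarrow> 'a) \<Rightarrow> 'm \<Rightarrow> 'g \<Rightarrow> 'g \<Rightarrow> 'a" where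
  "Zof c1 z0 = (\<lambda>p k g. if p \<in> carrier Mv \<and> k \<in> carrier G \<and> g \<in> carrier G then c1 p - z0 (mu p) k + z0 k g else 0)"

lemma pairs_D:
  assumes P: "(c1, z0) \<in> pairs_set G Mv act mu ma"
    and c: "p \<in> carrier Mv" "n \<in> carrier Mv" "k \<in> carrier G" "m \<in> carrier Mv" "h \<in> carrier G" "g \<in> carrier G"
  shows "Zof c1 z0 p (mu n \<otimes> k) (mu m \<otimes> h) - Zof c1 z0 (p \<otimes>\<^bsub>Mv\<^esub> n) k (h \<otimes> g)
       + Zof c1 z0 (n \<otimes>\<^bsub>Mv\<^esub> act k m) (k \<otimes> h) g - ma k (Zof c1 z0 m h g) = 0"
proof -
  have z0: "z0 \<in> Z2G G ma"
    and C1: "\<And>m n. m \<in> carrier Mv \<Longrightarrow> n \<in> carrier Mv \<Longrightarrow> c1 (n \<otimes>\<^bsub>Mv\<^esub> m) = c1 n + c1 m - z0 (mu n) (mu m)"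
    and C2: "\<And>m g. m \<in> carrier Mv \<Longrightarrow> g \<in> carrier G \<Longrightarrow> c1 (act g m) = ma g (c1 m) + z0 (mu (act g m)) g - z0 g (mu m)"
    using P unfolding pairs_set_def by auto
  define a where "a = mu p"
  define b where "b = mu n"
  define y where "y = mu m"
  define x where "x = mu (act k m)"
  have am: "act k m \<in> carrier Mv" using act_closed c by simp
  have cc: "a \<in> carrier G" "b \<in> carrier G" "y \<in> carrier G" "x \<in> carrier G"
    using c am by (simp_all add: a_def b_def y_def x_def)
  have xk: "x \<otimes> k = k \<otimes> y" using mu_act_k c by (simp add: x_def y_def)
  have xkh: "x \<otimes> (k \<otimes> h) = k \<otimes> (y \<otimes> h)"
    using xk cc c by (metis G.m_assoc)
  have Z1: "Zof c1 z0 p (b \<otimes> k) (y \<otimes> h) = c1 p - z0 a (b \<otimes> k) + z0 (b \<otimes> k) (y \<otimes> h)"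
    using c cc by (simp add: Zof_def a_def)
  have Z2: "Zof c1 z0 (p \<otimes>\<^bsub>Mv\<^esub> n) k (h \<otimes> g) = (c1 p + c1 n - z0 a b) - z0 (a \<otimes> b) k + z0 k (h \<otimes> g)"
    using c cc by (simp add: Zof_def a_def b_def C1)
  have Z3: "Zof c1 z0 (n \<otimes>\<^bsub>Mv\<^esub> act k m) (k \<otimes> h) g
      = (c1 n + (ma k (c1 m) + z0 x k - z0 k y) - z0 b x) - z0 (b \<otimes> x) (k \<otimes> h) + z0 (k \<otimes> h) g"
    using c cc am by (simp add: Zof_def x_def b_def y_def C1 C2)
  have Z4: "ma k (Zof c1 z0 m h g) = ma k (c1 m) - ma k (z0 y h) + ma k (z0 h g)"
    using c by (simp add: Zof_def y_def ma_add ma_diff)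
  have d1: "z0 a b - z0 a (b \<otimes> k) + z0 (a \<otimes> b) k - z0 b k = 0"
    using Z2G_coc[OF z0 cc(1,2) c(3)] c by (simp add: a_def ma_mu)
  have d2: "z0 k h - z0 k (h \<otimes> g) + z0 (k \<otimes> h) g - ma k (z0 h g) = 0"
    using Z2G_coc[OF z0 c(3,5,6)] .
  have d3: "z0 k y - z0 k (y \<otimes> h) + z0 (k \<otimes> y) h - ma k (z0 y h) = 0"
    using Z2G_coc[OF z0 c(3) cc(3) c(5)] .
  have d4: "z0 x k - z0 x (k \<otimes> h) + z0 (k \<otimes> y) h - z0 k h = 0"
    using Z2G_coc[OF z0 cc(4) c(3,5)] am by (simp add: x_def ma_mu xk[unfolded x_def])
  have d5: "z0 b k - z0 b (k \<otimes> (y \<otimes> h)) + z0 (b \<otimes> k) (y \<otimes> h) - z0 k (y \<otimes> h) = 0"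
    using Z2G_coc[OF z0 cc(2) c(3), of "y \<otimes> h"] cc c by (simp add: b_def ma_mu)
  have d6: "z0 b x - z0 b (k \<otimes> (y \<otimes> h)) + z0 (b \<otimes> x) (k \<otimes> h) - z0 x (k \<otimes> h) = 0"
    using Z2G_coc[OF z0 cc(2) cc(4), of "k \<otimes> h"] cc c xkh by (simp add: b_def ma_mu)
  have "Zof c1 z0 p (b \<otimes> k) (y \<otimes> h) - Zof c1 z0 (p \<otimes>\<^bsub>Mv\<^esub> n) k (h \<otimes> g)
       + Zof c1 z0 (n \<otimes>\<^bsub>Mv\<^esub> act k m) (k \<otimes> h) g - ma k (Zof c1 z0 m h g) = 0"
    unfolding Z1 Z2 Z3 Z4
    apply (rule comb[OF neg0[OF add0[OF add0[OF add0[OF add0[OF add0[OF neg0[OF d1] neg0[OF d2]] d3] neg0[OF d4]] neg0[OF d5]] d6]]])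
    by (simp add: algebra_simps)
  then show ?thesis by (simp add: b_def y_def)
qed


lemma pairs_Zof:
  assumes P: "(c1, z0) \<in> pairs_set G Mv act mu ma"
  shows "Zof c1 z0 \<in> Z2V G Mv act mu ma" "restr_map G Mv (Zof c1 z0) = (c1, z0)"
proof -
  have z0: "z0 \<in> Z2G G ma"
    and E: "\<And>m. m \<notin> carrier Mv \<Longrightarrow> c1 m = 0"
    and C1: "\<And>m n. m \<in> carrier Mv \<Longrightarrow> n \<in> carrier Mv \<Longrightarrow> c1 (n \<otimes>\<^bsub>Mv\<^esub> m) = c1 n + c1 m - z0 (mu n) (mu m)"
    using P unfolding pairs_set_def by auto
  show "Zof c1 z0 \<in> Z2V G Mv act mu ma"
    unfolding Z2V_def mem_Collect_eq
  proof (intro conjI allI impI ballI)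
    fix m h g assume "\<not> (m \<in> carrier Mv \<and> h \<in> carrier G \<and> g \<in> carrier G)"
    then show "Zof c1 z0 m h g = 0" unfolding Zof_def by auto
  next
    fix p n k m h g assume "p \<in> carrier Mv" "n \<in> carrier Mv" "k \<in> carrier G" "m \<in> carrier Mv" "h \<in> carrier G" "g \<in> carrier G"
    then show "Zof c1 z0 p (mu n \<otimes> k) (mu m \<otimes> h) - Zof c1 z0 (p \<otimes>\<^bsub>Mv\<^esub> n) k (h \<otimes> g)
       + Zof c1 z0 (n \<otimes>\<^bsub>Mv\<^esub> act k m) (k \<otimes> h) g - ma k (Zof c1 z0 m h g) = 0"
      using pairs_D[OF P] by blast
  qed
  have c11: "c1 \<one>\<^bsub>Mv\<^esub> = z0 \<one> \<one>"
    using C1[of "\<one>\<^bsub>Mv\<^esub>" "\<one>\<^bsub>Mv\<^esub>"] by simp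
  have f: "(\<lambda>m. Zof c1 z0 m \<one> \<one>) = c1"
  proof
    fix m show "Zof c1 z0 m \<one> \<one> = c1 m"
      using Z2G_h1[OF z0, of "mu m"] E[of m] by (auto simp: Zof_def ma_mu)
  qed
  have s: "(\<lambda>h g. Zof c1 z0 \<one>\<^bsub>Mv\<^esub> h g) = z0"
  proof (intro ext)
    fix h g show "Zof c1 z0 \<one>\<^bsub>Mv\<^esub> h g = z0 h g"
      using Z2G_1h[OF z0, of h] Z2G_ext[OF z0, of h g] c11 by (auto simp: Zof_def)
  qed
  show "restr_map G Mv (Zof c1 z0) = (c1, z0)"
    unfolding restr_map_def f s ..
qed

lemma Z2V_add: assumes "x \<in> Z2V G Mv act mu ma" "y \<in> Z2V G Mv act mu ma" shows "x + y \<in> Z2V G Mv act mu ma"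
  unfolding Z2V_def[of G Mv act mu ma] mem_Collect_eq
proof (intro conjI allI impI ballI)
  fix m h g assume c: "\<not> (m \<in> carrier Mv \<and> h \<in> carrier G \<and> g \<in> carrier G)"
  show "(x + y) m h g = 0" using Z2V_ext[OF assms(1) c] Z2V_ext[OF assms(2) c] by simp
next
  fix p n k m h g assume c: "p \<in> carrier Mv" "n \<in> carrier Mv" "k \<in> carrier G" "m \<in> carrier Mv" "h \<in> carrier G" "g \<in> carrier G"
  show "(x + y) p (mu n \<otimes> k) (mu m \<otimes> h) - (x + y) (p \<otimes>\<^bsub>Mv\<^esub> n) k (h \<otimes> g)
       + (x + y) (n \<otimes>\<^bsub>Mv\<^esub> act k m) (k \<otimes> h) g - ma k ((x + y) m h g) = 0"
    apply (rule comb[OF add0[OF Z2V_D[OF assms(1) c] Z2V_D[OF assms(2) c]]])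
    using c by (simp add: ma_add algebra_simps)
qed

lemma Z2V_neg: assumes "x \<in> Z2V G Mv act mu ma" shows "- x \<in> Z2V G Mv act mu ma"
  unfolding Z2V_def[of G Mv act mu ma] mem_Collect_eq
proof (intro conjI allI impI ballI)
  fix m h g assume c: "\<not> (m \<in> carrier Mv \<and> h \<in> carrier G \<and> g \<in> carrier G)"
  show "(- x) m h g = 0" using Z2V_ext[OF assms(1) c] by simp
next
  fix p n k m h g assume c: "p \<in> carrier Mv" "n \<in> carrier Mv" "k \<in> carrier G" "m \<in> carrier Mv" "h \<in> carrier G" "g \<in> carrier G"
  show "(- x) p (mu n \<otimes> k) (mu m \<otimes> h) - (- x) (p \<otimes>\<^bsub>Mv\<^esub> n) k (h \<otimes> g)
       + (- x) (n \<otimes>\<^bsub>Mv\<^esub> act k m) (k \<otimes> h) g - ma k ((- x) m h g) = 0"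
    apply (rule comb[OF neg0[OF Z2V_D[OF assms(1) c]]])
    using c by (simp add: ma_minus algebra_simps)
qed

lemma Z2V_group: "comm_group (add_grp (Z2V G Mv act mu ma))"
  apply (rule add_grp_comm_group)
  by (simp_all add: Z2V_add Z2V_neg) (simp add: Z2V_def ma_zero)

lemma Z2G_add: assumes "x \<in> Z2G G ma" "y \<in> Z2G G ma" shows "x + y \<in> Z2G G ma"
  unfolding Z2G_def[of G ma] mem_Collect_eq
proof (intro conjI allI impI ballI)
  fix h g assume c: "\<not> (h \<in> carrier G \<and> g \<in> carrier G)"
  show "(x + y) h g = 0" using Z2G_ext[OF assms(1) c] Z2G_ext[OF assms(2) c] by simp
next
  fix r q p assume c: "r \<in> carrier G" "q \<in> carrier G" "p \<in> carrier G"
  show "(x + y) r q - (x + y) r (q \<otimes> p) + (x + y) (r \<otimes> q) p - ma r ((x + y) q p) = 0"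
    apply (rule comb[OF add0[OF Z2G_coc[OF assms(1) c] Z2G_coc[OF assms(2) c]]])
    using c by (simp add: ma_add algebra_simps)
qed

lemma Z2G_neg: assumes "x \<in> Z2G G ma" shows "- x \<in> Z2G G ma"
  unfolding Z2G_def[of G ma] mem_Collect_eq
proof (intro conjI allI impI ballI)
  fix h g assume c: "\<not> (h \<in> carrier G \<and> g \<in> carrier G)"
  show "(- x) h g = 0" using Z2G_ext[OF assms(1) c] by simp
next
  fix r q p assume c: "r \<in> carrier G" "q \<in> carrier G" "p \<in> carrier G"
  show "(- x) r q - (- x) r (q \<otimes> p) + (- x) (r \<otimes> q) p - ma r ((- x) q p) = 0"
    apply (rule comb[OF neg0[OF Z2G_coc[OF assms(1) c]]])
    using c by (simp add: ma_minus algebra_simps)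
qed

lemma Z2G_zero: "0 \<in> Z2G G ma"
  by (simp add: Z2G_def ma_zero)

lemma pairs_E:
  assumes "(c1, z0) \<in> pairs_set G Mv act mu ma"
  shows "z0 \<in> Z2G G ma" "\<And>m. m \<notin> carrier Mv \<Longrightarrow> c1 m = 0"
    "\<And>m n. m \<in> carrier Mv \<Longrightarrow> n \<in> carrier Mv \<Longrightarrow> c1 (n \<otimes>\<^bsub>Mv\<^esub> m) = c1 n + c1 m - z0 (mu n) (mu m)"
    "\<And>m g. m \<in> carrier Mv \<Longrightarrow> g \<in> carrier G \<Longrightarrow> c1 (act g m) = ma g (c1 m) + z0 (mu (act g m)) g - z0 g (mu m)"
  using assms unfolding pairs_set_def by auto

lemma pairs_group: "comm_group (add_grp (pairs_set G Mv act mu ma))"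
proof (rule add_grp_comm_group)
  show "0 \<in> pairs_set G Mv act mu ma"
    by (simp add: pairs_set_def zero_prod_def Z2G_zero ma_zero)
next
  fix u v assume u: "u \<in> pairs_set G Mv act mu ma" and v: "v \<in> pairs_set G Mv act mu ma"
  obtain c1 z0 where uu: "u = (c1, z0)" by (cases u)
  obtain d1 w0 where vv: "v = (d1, w0)" by (cases v)
  show "u + v \<in> pairs_set G Mv act mu ma"
    using pairs_E(1,2)[OF u[unfolded uu]] pairs_E(1,2)[OF v[unfolded vv]] unfolding uu vv pairs_set_def
    by (simp add: Z2G_add ma_add pairs_E(3,4)[OF u[unfolded uu]] pairs_E(3,4)[OF v[unfolded vv]] act_closed algebra_simps)
next
  fix u assume u: "u \<in> pairs_set G Mv act mu ma"
  obtain c1 z0 where uu: "u = (c1, z0)" by (cases u)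
  show "- u \<in> pairs_set G Mv act mu ma"
    using pairs_E(1,2)[OF u[unfolded uu]] unfolding uu pairs_set_def
    by (simp add: Z2G_neg ma_minus pairs_E(3,4)[OF u[unfolded uu]] act_closed algebra_simps)
qed

lemma main: "comm_group (add_grp (Z2V G Mv act mu ma))
       \<and> comm_group (add_grp (pairs_set G Mv act mu ma))
       \<and> restr_map G Mv \<in> iso (add_grp (Z2V G Mv act mu ma)) (add_grp (pairs_set G Mv act mu ma))"
proof (intro conjI)
  show "comm_group (add_grp (Z2V G Mv act mu ma))" by (rule Z2V_group)
  show "comm_group (add_grp (pairs_set G Mv act mu ma))" by (rule pairs_group)
  show "restr_map G Mv \<in> iso (add_grp (Z2V G Mv act mu ma)) (add_grp (pairs_set G Mv act mu ma))"
    unfolding iso_def hom_def mem_Collect_eq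
  proof (intro conjI)
    show "restr_map G Mv \<in> carrier (add_grp (Z2V G Mv act mu ma)) \<rightarrow> carrier (add_grp (pairs_set G Mv act mu ma))"
      using Z2V_pairs by (auto simp: add_grp_def)
    show "\<forall>x\<in>carrier (add_grp (Z2V G Mv act mu ma)). \<forall>y\<in>carrier (add_grp (Z2V G Mv act mu ma)).
        restr_map G Mv (x \<otimes>\<^bsub>add_grp (Z2V G Mv act mu ma)\<^esub> y) =
        restr_map G Mv x \<otimes>\<^bsub>add_grp (pairs_set G Mv act mu ma)\<^esub> restr_map G Mv y"
      by (simp add: add_grp_def restr_map_def fun_eq_iff)
    show "bij_betw (restr_map G Mv) (carrier (add_grp (Z2V G Mv act mu ma))) (carrier (add_grp (pairs_set G Mv act mu ma)))"
      unfolding add_grp_def partial_object.simps bij_betw_def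
    proof
      show "inj_on (restr_map G Mv) (Z2V G Mv act mu ma)"
        using Z2V_inj by (meson inj_onI)
      show "restr_map G Mv ` Z2V G Mv act mu ma = pairs_set G Mv act mu ma"
      proof
        show "restr_map G Mv ` Z2V G Mv act mu ma \<subseteq> pairs_set G Mv act mu ma" using Z2V_pairs by blast
        show "pairs_set G Mv act mu ma \<subseteq> restr_map G Mv ` Z2V G Mv act mu ma"
        proof
          fix q assume q: "q \<in> pairs_set G Mv act mu ma"
          obtain c1 z0 where qq: "q = (c1, z0)" by (cases q)
          show "q \<in> restr_map G Mv ` Z2V G Mv act mu ma"
            using pairs_Zof[of c1 z0] q qq by (metis image_eqI)
        qed
      qed
    qed
  qed
qed

end

theorem corollary3p12:
  fixes G :: "('g, 'c) monoid_scheme" and Mv :: "('m, 'd) monoid_scheme"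
    and act :: "'g \<Rightarrow> 'm \<Rightarrow> 'm" and mu :: "'m \<Rightarrow> 'g"
    and ma :: "'g \<Rightarrow> 'a::ab_group_add \<Rightarrow> 'a"
  assumes "crossed_module G Mv act mu"
    and "pi0_module G Mv mu ma"
  shows "comm_group (add_grp (Z2V G Mv act mu ma))
       \<and> comm_group (add_grp (pairs_set G Mv act mu ma))
       \<and> restr_map G Mv \<in> iso (add_grp (Z2V G Mv act mu ma)) (add_grp (pairs_set G Mv act mu ma))"
proof -
  interpret cm_mod G Mv act mu ma
    using assms by (simp add: cm_mod_def cm_mod_axioms_def)
  show ?thesis by (rule main)
qed

end
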